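(* Let $\alpha\in(1,2)$ and let $X_1$ be a random variable with characteristic function $\mathbb{E}e^{itX_1}=\exp\left(\int_0^1(e^{itx}-1-itx)\frac{dx}{x^{\alpha+1}}\right)$. Then for $0\le y\le\frac{1}{2-\alpha}$, $$\mathbb{P}(X_1\ge y)\le e^{1/4}e^{-\frac12(2-\alpha)y^2},$$ and for $0\le y\le\frac{2}{2-\alpha}$, $$\mathbb{P}(X_1\le -y)\le e^{4/3}e^{-\frac12(2-\alpha)y^2}.$$ *)

theory Defs
  imports "HOL-Probability.Probability"
begin

end

theory Submission
  imports Defs
begin


lemma norm_exp_quad:
  fixes z :: complex
  assumes "norm z \<le> 1/2"
  shows "norm (exp z - 1 - z) \<le> norm z ^ 2"
proof (cases "z = 0")
  case False
  have sums: "(\<lambda>k. z ^ (k + 2) /\<^sub>R fact (k + 2)) sums (exp z - (\<Sum>k<2. z ^ k /\<^sub>R fact k))"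
    by (intro sums_split_initial_segment exp_converges)
  have "summable (\<lambda>k. norm z ^ (k + 2) /\<^sub>R fact (k + 2))"
    using summable_norm_exp[of z]
    by (intro summable_norm summable_ignore_initial_segment)
       (auto simp: norm_power norm_divide divide_simps)
  also have "?this \<longleftrightarrow> summable (\<lambda>k. norm z ^ 2 * (norm z ^ k / fact (k +2)))"
    by (simp add: power_add mult_ac divide_simps power2_eq_square del: of_nat_Suc of_nat_add)
  also have "\<dots> \<longleftrightarrow> summable (\<lambda>k. norm z ^ k / fact (k + 2))"
    by (subst summable_cmult_iff) (use \<open>z \<noteq> 0\<close> in auto)
  finally have summable: "summable (\<lambda>k. norm z ^ k / fact (k + 2))" .
  have "exp z - 1 - z = (\<Sum>k. z ^ (k + 2) / fact (k + 2))"
    using sums by (simp add: sums_iff scaleR_conv_of_real divide_simps eval_nat_numeral)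
  also have "norm \<dots> \<le> (\<Sum>k. norm (z ^ (k + 2) / fact (k + 2)))"
    using summable_norm_exp[of z]
    by (intro summable_norm summable_ignore_initial_segment)
       (auto simp: norm_power norm_divide divide_simps)
  also have "\<dots> = (\<Sum>k. norm z ^ 2 * (norm z ^ k / fact (k + 2)))"
    by (simp add: power_add norm_power norm_divide mult_ac norm_mult power2_eq_square del: of_nat_Suc)
  also have "\<dots> = norm z ^ 2 * (\<Sum>k. norm z ^ k / fact (k + 2))"
    using summable by (rule suminf_mult)
  also have "\<dots> \<le> norm z ^ 2 * (1 / (1 - norm z) / 2)"
  proof (intro mult_left_mono, rule sums_le)
    show "(\<lambda>k. norm z ^ k / fact (k + 2)) sums (\<Sum>k. norm z ^ k / fact (k + 2))"
      using summable by blast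
    show "(\<lambda>k. norm z ^ k / 2) sums (1 / (1 - norm z) / 2)"
      using assms by (intro geometric_sums sums_divide) auto
  next
    fix k :: nat
    have "norm z ^ k / fact (k + 2) \<le> norm z ^ k / fact 2"
      by (intro divide_left_mono fact_mono) auto
    thus "norm z ^ k / fact (k + 2) \<le> norm z ^ k / 2"
      by simp
  qed (auto simp: divide_simps)
  also have "\<dots> \<le> norm z ^ 2 * 1"
    using assms by (intro mult_left_mono) (auto simp: divide_simps)
  finally show ?thesis by simp
qed auto

lemma norm_power_diff_le:
  fixes u v :: complex
  assumes "norm u \<le> 1" "norm v \<le> 1"
  shows "norm (u ^ n - v ^ n) \<le> real n * norm (u - v)"
proof (induction n)
  case (Suc n)
  have "u ^ Suc n - v ^ Suc n = u * (u ^ n - v ^ n) + (u - v) * v ^ n"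
    by (simp add: algebra_simps)
  also have "norm \<dots> \<le> norm u * norm (u ^ n - v ^ n) + norm (u - v) * norm v ^ n"
    by (metis norm_mult norm_power norm_triangle_ineq)
  also have "\<dots> \<le> 1 * (real n * norm (u - v)) + norm (u - v) * 1"
    using assms Suc by (intro add_mono mult_mono power_le_one) auto
  finally show ?case by (simp add: algebra_simps)
qed simp



definition qf :: "real \<Rightarrow> real \<Rightarrow> real" where "qf a x = 1 / x powr (a + 1)"
definition Lam :: "real \<Rightarrow> real \<Rightarrow> real" where "Lam a e = (LBINT x:{e..1}. qf a x)"
definition Dr :: "real \<Rightarrow> real \<Rightarrow> real" where "Dr a e = (LBINT x:{e..1}. x * qf a x)"
definition wd :: "real \<Rightarrow> real \<Rightarrow> nat \<Rightarrow> real \<Rightarrow> real" where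
  "wd a e n x = indicator {0..<e} x * ((1 - Lam a e / n) / e) + indicator {e..1} x * (qf a x / n)"
definition Ym :: "real \<Rightarrow> real \<Rightarrow> nat \<Rightarrow> real \<Rightarrow> real" where
  "Ym a e n x = (if x < e then 0 else x) - Dr a e / n"

lemma qf_cont: "0 < e \<Longrightarrow> continuous_on {e..1} (qf a)"
  unfolding qf_def by (intro continuous_intros) auto

lemma qf_nonneg: "0 \<le> qf a x"
  unfolding qf_def by simp

lemma wd_core:
  fixes f :: "real \<Rightarrow> 'b::{banach, second_countable_topology}"
  assumes e: "0 < e" "e \<le> 1" and n: "0 < n" and f: "continuous_on UNIV f"
  shows "integrable lborel (\<lambda>x. wd a e n x *\<^sub>R f (Ym a e n x))"
    and "(\<integral>x. wd a e n x *\<^sub>R f (Ym a e n x) \<partial>lborel) =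
         (1 - Lam a e / n) *\<^sub>R f (- Dr a e / n) + (1 / n) *\<^sub>R (LBINT x:{e..1}. qf a x *\<^sub>R f (x - Dr a e / n))"
proof -
  define c where "c = (1 - Lam a e / n) / e"
  define C where "C = f (- Dr a e / n)"
  have eq: "wd a e n x *\<^sub>R f (Ym a e n x) =
     indicator {0..<e} x *\<^sub>R (c *\<^sub>R C) + indicator {e..1} x *\<^sub>R ((1 / n) *\<^sub>R (qf a x *\<^sub>R f (x - Dr a e / n)))" for x
    by (auto simp: wd_def Ym_def c_def C_def indicator_def)
  have i1: "integrable lborel (\<lambda>x. indicator {0..<e} x *\<^sub>R (c *\<^sub>R C))"
    using e by (intro integrable_scaleR_left integrable_real_indicator) (auto simp: ennreal_less_top)
  have cont: "continuous_on {e..1} (\<lambda>x. qf a x *\<^sub>R f (x - Dr a e / n))"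
    using e by (intro continuous_intros qf_cont continuous_on_compose2[OF f]) auto
  have si: "set_integrable lborel {e..1} (\<lambda>x. qf a x *\<^sub>R f (x - Dr a e / n))"
    by (rule borel_integrable_atLeastAtMost'[OF cont])
  have i2: "integrable lborel (\<lambda>x. indicator {e..1} x *\<^sub>R ((1 / n) *\<^sub>R (qf a x *\<^sub>R f (x - Dr a e / n))))"
    using integrable_scaleR_right[OF si[unfolded set_integrable_def], of "1/n"]
    by (simp add: scaleR_scaleR mult.commute)
  show "integrable lborel (\<lambda>x. wd a e n x *\<^sub>R f (Ym a e n x))"
    unfolding eq using i1 i2 by (rule Bochner_Integration.integrable_add)
  have "(\<integral>x. wd a e n x *\<^sub>R f (Ym a e n x) \<partial>lborel) =
     (\<integral>x. indicator {0..<e} x *\<^sub>R (c *\<^sub>R C) \<partial>lborel) + (\<integral>x. indicator {e..1} x *\<^sub>R ((1 / n) *\<^sub>R (qf a x *\<^sub>R f (x - Dr a e / n))) \<partial>lborel)"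
    unfolding eq using i1 i2 by (rule Bochner_Integration.integral_add)
  also have "(\<integral>x. indicator {0..<e} x *\<^sub>R (c *\<^sub>R C) \<partial>lborel) = e *\<^sub>R (c *\<^sub>R C)"
    using e by simp
  also have "e *\<^sub>R (c *\<^sub>R C) = (1 - Lam a e / n) *\<^sub>R C"
    using e by (simp add: c_def)
  also have "(\<integral>x. indicator {e..1} x *\<^sub>R ((1 / n) *\<^sub>R (qf a x *\<^sub>R f (x - Dr a e / n))) \<partial>lborel)
      = (1 / n) *\<^sub>R (LBINT x:{e..1}. qf a x *\<^sub>R f (x - Dr a e / n))"
    unfolding set_lebesgue_integral_def
    by (subst integral_scaleR_right[symmetric]) (simp add: scaleR_scaleR mult.commute)
  finally show "(\<integral>x. wd a e n x *\<^sub>R f (Ym a e n x) \<partial>lborel) =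
         (1 - Lam a e / n) *\<^sub>R f (- Dr a e / n) + (1 / n) *\<^sub>R (LBINT x:{e..1}. qf a x *\<^sub>R f (x - Dr a e / n))"
    by (simp add: C_def)
qed

definition rho :: "real \<Rightarrow> real \<Rightarrow> nat \<Rightarrow> real measure" where
  "rho a e n = distr (density lborel (\<lambda>x. ennreal (wd a e n x))) borel (Ym a e n)"

definition nu :: "real \<Rightarrow> real \<Rightarrow> nat \<Rightarrow> real measure" where
  "nu a e n = distr (Pi\<^sub>M {..<n} (\<lambda>_. rho a e n)) borel (\<lambda>\<omega>. \<Sum>i<n. \<omega> i)"

lemma wd_nonneg: "0 < e \<Longrightarrow> Lam a e \<le> n \<Longrightarrow> 0 < n \<Longrightarrow> 0 \<le> wd a e n x"
  unfolding wd_def using qf_nonneg[of a x]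
  by (intro add_nonneg_nonneg mult_nonneg_nonneg) (auto simp: field_simps)

lemma wd_meas[measurable]: "wd a e n \<in> borel_measurable borel"
  unfolding wd_def qf_def by measurable

lemma Ym_meas[measurable]: "Ym a e n \<in> borel_measurable borel"
  unfolding Ym_def by measurable

lemma rho_prob:
  assumes e: "0 < e" "e \<le> 1" and n: "0 < n" and L: "Lam a e \<le> n"
  shows "prob_space (rho a e n)"
proof -
  have c1: "continuous_on UNIV (\<lambda>_::real. 1::real)" by simp
  note W = wd_core[OF e n c1, of a]
  have "(\<integral>x. wd a e n x \<partial>lborel) = 1"
    using W(2) n by (simp add: Lam_def)
  moreover have "integrable lborel (wd a e n)" using W(1) by simp
  ultimately have "emeasure (density lborel (\<lambda>x. ennreal (wd a e n x))) UNIV = 1"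
    using wd_nonneg[OF e(1) L n]
    by (subst emeasure_density) (auto simp: nn_integral_eq_integral)
  then have "prob_space (density lborel (\<lambda>x. ennreal (wd a e n x)))"
    by (intro prob_spaceI) simp
  then show ?thesis unfolding rho_def by (rule prob_space.prob_space_distr) simp
qed

lemma rho_integral:
  fixes f :: "real \<Rightarrow> 'b::{banach, second_countable_topology}"
  assumes e: "0 < e" "e \<le> 1" and n: "0 < n" and L: "Lam a e \<le> n" and f: "continuous_on UNIV f"
  shows "integrable (rho a e n) f"
    and "(\<integral>x. f x \<partial>rho a e n) =
         (1 - Lam a e / n) *\<^sub>R f (- Dr a e / n) + (1 / n) *\<^sub>R (LBINT x:{e..1}. qf a x *\<^sub>R f (x - Dr a e / n))"
proof -
  have fm[measurable]: "f \<in> borel_measurable borel"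
    using f by (rule borel_measurable_continuous_onI)
  note W = wd_core[OF e n f, of a]
  have "(\<integral>x. f x \<partial>rho a e n) = (\<integral>x. f (Ym a e n x) \<partial>density lborel (\<lambda>x. ennreal (wd a e n x)))"
    unfolding rho_def by (rule integral_distr) auto
  also have "\<dots> = (\<integral>x. wd a e n x *\<^sub>R f (Ym a e n x) \<partial>lborel)"
    using wd_nonneg[OF e(1) L n] by (intro integral_density) auto
  finally show "(\<integral>x. f x \<partial>rho a e n) =
         (1 - Lam a e / n) *\<^sub>R f (- Dr a e / n) + (1 / n) *\<^sub>R (LBINT x:{e..1}. qf a x *\<^sub>R f (x - Dr a e / n))"
    using W(2) by simp
  have "integrable (density lborel (\<lambda>x. ennreal (wd a e n x))) (\<lambda>x. f (Ym a e n x))"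
    using wd_nonneg[OF e(1) L n] W(1) by (subst integrable_density) auto
  then show "integrable (rho a e n) f"
    unfolding rho_def by (subst integrable_distr_eq) auto
qed



lemma sets_rho[measurable_cong]: "sets (rho a e n) = sets borel" by (simp add: rho_def)

lemma meas_sum_PiM[measurable]: "(\<lambda>\<omega>. \<Sum>i<n. \<omega> i) \<in> borel_measurable (Pi\<^sub>M {..<n} (\<lambda>_. rho a e n))"
  by measurable

lemma nu_prob:
  assumes e: "0 < e" "e \<le> 1" and n: "0 < n" and L: "Lam a e \<le> n"
  shows "real_distribution (nu a e n)"
proof -
  interpret P: product_prob_space "\<lambda>_. rho a e n"
    using rho_prob[OF e n L] by (simp add: product_prob_space_def product_sigma_finite_def
        prob_space_imp_sigma_finite product_prob_space_axioms_def)
  interpret PP: prob_space "Pi\<^sub>M {..<n} (\<lambda>_. rho a e n)"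
    by (rule prob_space_PiM) (use rho_prob[OF e n L] in auto)
  show ?thesis unfolding nu_def
    by (rule PP.real_distribution_distr) (simp add: meas_sum_PiM)
qed

lemma nu_integral_mult:
  fixes g :: "real \<Rightarrow> 'b::{real_normed_field, banach, second_countable_topology}"
  assumes e: "0 < e" "e \<le> 1" and n: "0 < n" and L: "Lam a e \<le> n"
    and g: "continuous_on UNIV g" and gadd: "\<And>x y. g (x + y) = g x * g y" and g0: "g 0 = 1"
  shows "(\<integral>x. g x \<partial>nu a e n) = (\<integral>x. g x \<partial>rho a e n) ^ n"
proof -
  interpret P: product_prob_space "\<lambda>_. rho a e n"
    using rho_prob[OF e n L] by (simp add: product_prob_space_def product_sigma_finite_def
        prob_space_imp_sigma_finite product_prob_space_axioms_def)
  have gm[measurable]: "g \<in> borel_measurable borel"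
    using g by (rule borel_measurable_continuous_onI)
  have gs: "g (\<Sum>i\<in>I. w i) = (\<Prod>i\<in>I. g (w i))" if "finite I" for I and w :: "nat \<Rightarrow> real"
    using that by (induction I rule: finite_induct) (auto simp: g0 gadd)
  have "(\<integral>x. g x \<partial>nu a e n) = (\<integral>\<omega>. g (\<Sum>i<n. \<omega> i) \<partial>Pi\<^sub>M {..<n} (\<lambda>_. rho a e n))"
    unfolding nu_def by (rule integral_distr) (auto simp: meas_sum_PiM)
  also have "\<dots> = (\<integral>\<omega>. (\<Prod>i\<in>{..<n}. g (\<omega> i)) \<partial>Pi\<^sub>M {..<n} (\<lambda>_. rho a e n))"
    by (simp add: gs)
  also have "\<dots> = (\<Prod>i\<in>{..<n}. (\<integral>x. g x \<partial>rho a e n))"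
    by (rule P.product_integral_prod) (auto intro: rho_integral(1)[OF e n L g])
  finally show ?thesis by simp
qed

lemma nu_integrable_mult:
  fixes g :: "real \<Rightarrow> 'b::{real_normed_field, banach, second_countable_topology}"
  assumes e: "0 < e" "e \<le> 1" and n: "0 < n" and L: "Lam a e \<le> n"
    and g: "continuous_on UNIV g" and gadd: "\<And>x y. g (x + y) = g x * g y" and g0: "g 0 = 1"
  shows "integrable (nu a e n) g"
proof -
  interpret P: product_prob_space "\<lambda>_. rho a e n"
    using rho_prob[OF e n L] by (simp add: product_prob_space_def product_sigma_finite_def
        prob_space_imp_sigma_finite product_prob_space_axioms_def)
  have gm[measurable]: "g \<in> borel_measurable borel"
    using g by (rule borel_measurable_continuous_onI)
  have gs: "g (\<Sum>i\<in>I. w i) = (\<Prod>i\<in>I. g (w i))" if "finite I" for I and w :: "nat \<Rightarrow> real"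
    using that by (induction I rule: finite_induct) (auto simp: g0 gadd)
  have "integrable (Pi\<^sub>M {..<n} (\<lambda>_. rho a e n)) (\<lambda>\<omega>. (\<Prod>i\<in>{..<n}. g (\<omega> i)))"
    by (rule P.product_integrable_prod) (auto intro: rho_integral(1)[OF e n L g])
  then have "integrable (Pi\<^sub>M {..<n} (\<lambda>_. rho a e n)) (\<lambda>\<omega>. g (\<Sum>i<n. \<omega> i))"
    by (simp add: gs)
  then show ?thesis
    unfolding nu_def by (subst integrable_distr_eq) (auto simp: meas_sum_PiM)
qed



definition Fi :: "real \<Rightarrow> real \<Rightarrow> real \<Rightarrow> complex" where
  "Fi a t x = (iexp (t * x) - 1 - \<i> * complex_of_real (t * x)) * complex_of_real (1 / x powr (a + 1))"

lemma Lam_nonneg: "0 \<le> Lam a e"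
  unfolding Lam_def set_lebesgue_integral_def by (intro Bochner_Integration.integral_nonneg) (auto simp: qf_nonneg)

lemma char_nu_approx:
  assumes e: "0 < e" "e \<le> 1" and n: "0 < n" and L: "4 * Lam a e \<le> n"
  shows "cmod (char (nu a e n) t - exp (CLBINT x:{e..1}. Fi a t x)) \<le> 4 * (Lam a e)\<^sup>2 / n"
proof -
  have L': "Lam a e \<le> n" using L Lam_nonneg[of a e] by linarith
  define D where "D = Dr a e"
  define Lm where "Lm = Lam a e"
  define K where "K = (CLBINT x:{e..1}. qf a x *\<^sub>R iexp (t * x))"
  define w where "w = (K - complex_of_real Lm) / n"
  define c where "c = iexp (- (t * D / n))"
  have qc: "continuous_on {e..1} (qf a)" using qf_cont e by auto
  have siK: "set_integrable lborel {e..1} (\<lambda>x. qf a x *\<^sub>R iexp (t * x))"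
    by (intro borel_integrable_atLeastAtMost' continuous_intros qc)
  have siL: "set_integrable lborel {e..1} (\<lambda>x. complex_of_real (qf a x))"
    by (intro borel_integrable_atLeastAtMost' continuous_intros qc)
  have siD: "set_integrable lborel {e..1} (\<lambda>x. \<i> * complex_of_real (t * (x * qf a x)))"
    by (intro borel_integrable_atLeastAtMost' continuous_intros qc)
  have cont_iexp: "continuous_on UNIV (\<lambda>s. iexp (t * s))"
    by (intro continuous_intros)
  have "char (rho a e n) t = (1 - Lm / n) *\<^sub>R iexp (t * (- D / n)) +
      (1 / n) *\<^sub>R (CLBINT x:{e..1}. qf a x *\<^sub>R iexp (t * (x - D / n)))"
    unfolding char_def D_def Lm_def by (rule rho_integral(2)[OF e n L' cont_iexp])
  also have "(CLBINT x:{e..1}. qf a x *\<^sub>R iexp (t * (x - D / n))) = (CLBINT x:{e..1}. c * (qf a x *\<^sub>R iexp (t * x)))"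
    by (rule set_lebesgue_integral_cong) (auto simp: c_def right_diff_distrib exp_diff exp_minus
          scaleR_conv_of_real field_simps)
  also have "\<dots> = c * K" unfolding K_def by (subst set_integral_mult_right[symmetric]) (simp add: mult_scaleR_right)
  finally have u: "char (rho a e n) t = c * (1 + w)"
    using n by (simp add: c_def w_def scaleR_conv_of_real field_simps)
  have "(CLBINT x:{e..1}. Fi a t x) = (CLBINT x:{e..1}. qf a x *\<^sub>R iexp (t * x) - complex_of_real (qf a x)
       - \<i> * complex_of_real (t * (x * qf a x)))"
    using e by (intro set_lebesgue_integral_cong) (auto simp: Fi_def qf_def scaleR_conv_of_real field_simps)
  also have "\<dots> = K - complex_of_real Lm - \<i> * complex_of_real (t * D)"
    using siK siL siD unfolding K_def Lm_def D_def Lam_def Dr_def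
    by (simp add: set_integral_diff flip: set_integral_complex_of_real)
  finally have eqI: "(CLBINT x:{e..1}. Fi a t x) = K - complex_of_real Lm - \<i> * complex_of_real (t * D)" .
  have "(CLBINT x:{e..1}. Fi a t x) / n = w - \<i> * complex_of_real (t * D / n)"
    unfolding eqI w_def by (simp add: diff_divide_distrib)
  then have v: "exp ((CLBINT x:{e..1}. Fi a t x) / n) = c * exp w"
    by (simp add: c_def exp_diff exp_minus mult.commute divide_inverse)
  have nK: "norm K \<le> Lm"
    unfolding K_def Lm_def Lam_def
    using set_integral_norm_bound[OF siK] qf_nonneg[of a]
    by (simp add: norm_mult abs_of_nonneg)
  have nw: "norm w \<le> 2 * Lm / n"
  proof -
    have "norm w = norm (K - complex_of_real Lm) / n" by (simp add: w_def norm_divide)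
    also have "\<dots> \<le> (norm K + Lm) / n"
      using Lam_nonneg[of a e] norm_triangle_ineq4[of K "complex_of_real Lm"] n
      by (intro divide_right_mono) (auto simp: Lm_def)
    also have "\<dots> \<le> 2 * Lm / n" using nK n by (intro divide_right_mono) auto
    finally show ?thesis .
  qed
  have nw2: "norm w \<le> 1/2"
  proof -
    have "2 * Lm / n \<le> 1/2" using L n by (simp add: Lm_def divide_simps)
    then show ?thesis using nw by linarith
  qed
  have Rew: "Re w \<le> 0"
  proof -
    have "Re K \<le> Lm" using nK complex_Re_le_cmod order_trans by blast
    then show ?thesis using n by (simp add: w_def Re_divide_of_nat divide_nonpos_pos)
  qed
  have nc: "norm c = 1" by (simp add: c_def)
  have nu1: "norm (char (rho a e n) t) \<le> 1"
    using real_distribution.cmod_char_le_1[of "rho a e n"] rho_prob[OF e n L']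
    by (simp add: real_distribution_def real_distribution_axioms_def sets_rho)
  have nv1: "norm (c * exp w) \<le> 1"
    using Rew by (simp add: norm_mult nc)
  have "char (nu a e n) t = char (rho a e n) t ^ n"
    unfolding char_def by (rule nu_integral_mult[OF e n L']) (auto simp: exp_add distrib_left intro!: continuous_intros)
  moreover have "exp (CLBINT x:{e..1}. Fi a t x) = (c * exp w) ^ n"
  proof -
    have "exp (CLBINT x:{e..1}. Fi a t x) = exp (of_nat n * ((CLBINT x:{e..1}. Fi a t x) / n))"
      using n by simp
    also have "\<dots> = (c * exp w) ^ n" by (simp only: exp_of_nat_mult v)
    finally show ?thesis .
  qed
  ultimately have "cmod (char (nu a e n) t - exp (CLBINT x:{e..1}. Fi a t x)) =
      norm (char (rho a e n) t ^ n - (c * exp w) ^ n)" by simp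
  also have "\<dots> \<le> real n * norm (char (rho a e n) t - c * exp w)"
    by (rule norm_power_diff_le[OF nu1 nv1])
  also have "norm (char (rho a e n) t - c * exp w) = norm (exp w - 1 - w)"
  proof -
    have "char (rho a e n) t - c * exp w = c * (1 + w - exp w)" unfolding u by (simp add: algebra_simps)
    then have "norm (char (rho a e n) t - c * exp w) = norm (1 + w - exp w)"
      by (metis norm_mult nc mult_1)
    also have "1 + w - exp w = - (exp w - 1 - w)" by simp
    finally show ?thesis by (simp only: norm_minus_cancel)
  qed
  also have "real n * norm (exp w - 1 - w) \<le> real n * (2 * Lm / n) ^ 2"
    using norm_exp_quad[OF nw2] nw norm_ge_zero[of w]
    by (intro mult_left_mono order_trans[OF _ power_mono[OF nw]]) auto
  also have "\<dots> = 4 * Lm\<^sup>2 / n" using n by (simp add: power2_eq_square field_simps)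
  finally show ?thesis by (simp add: Lm_def)
qed



lemma powr_int01:
  assumes "p > -1"
  shows "set_integrable lborel {0<..1} (\<lambda>x::real. x powr p)"
proof -
  have "(\<lambda>x::real. x powr p) integrable_on {0<..1}"
    by (rule integrable_on_powr_from_0') (use assms in auto)
  then have "(\<lambda>x::real. x powr p) absolutely_integrable_on {0<..1}"
    by (subst absolutely_integrable_on_iff_nonneg) auto
  then show ?thesis
    unfolding set_integrable_def by (subst (asm) integrable_completion) auto
qed

lemma Fi_bound:
  assumes "0 < x"
  shows "cmod (Fi a t x) \<le> t\<^sup>2 / 2 * x powr (1 - a)"
proof -
  have A: "cmod (iexp (t * x) - 1 - \<i> * complex_of_real (t * x)) \<le> \<bar>t * x\<bar> ^ 2 / 2"
    using iexp_approx1[of "t * x" 1] by (simp add: algebra_simps power2_eq_square)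
  have q: "0 \<le> 1 / x powr (a + 1)" by simp
  have "cmod (Fi a t x) = cmod (iexp (t * x) - 1 - \<i> * complex_of_real (t * x)) * (1 / x powr (a + 1))"
    unfolding Fi_def norm_mult norm_of_real using q by (simp only: abs_of_nonneg)
  also have "\<dots> \<le> \<bar>t * x\<bar> ^ 2 / 2 * (1 / x powr (a + 1))"
    by (rule mult_right_mono[OF A q])
  finally have "cmod (Fi a t x) \<le> \<bar>t * x\<bar> ^ 2 / 2 * (1 / x powr (a + 1))" .
  also have "\<bar>t * x\<bar> ^ 2 / 2 * (1 / x powr (a + 1)) = t\<^sup>2 / 2 * (x powr 2 / x powr (a + 1))"
    using assms by (simp add: power_mult_distrib powr_realpow)
  also have "x powr 2 / x powr (a + 1) = x powr (1 - a)"
    by (simp only: powr_diff[symmetric]) (simp add: algebra_simps)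
  finally show ?thesis .
qed

lemma Fi_meas[measurable]: "Fi a t \<in> borel_measurable borel"
  unfolding Fi_def by measurable

lemma Fi_int:
  assumes "a < 2"
  shows "set_integrable lborel {0<..1} (Fi a t)"
  unfolding set_integrable_def
proof (rule Bochner_Integration.integrable_bound[OF _ _ AE_I2])
  show "integrable lborel (\<lambda>x. indicator {0<..1} x *\<^sub>R (t\<^sup>2 / 2 * x powr (1 - a)))"
    using integrable_mult_right[OF powr_int01[of "1 - a", unfolded set_integrable_def], of "t\<^sup>2/2"] assms
    by (simp add: mult_ac)
  fix x :: real
  show "norm (indicator {0<..1} x *\<^sub>R Fi a t x) \<le> norm (indicator {0<..1} x *\<^sub>R (t\<^sup>2 / 2 * x powr (1 - a)))"
    using Fi_bound[of x a t] by (auto simp: indicator_def)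
qed auto

lemma Fi_lim:
  assumes "a < 2"
  shows "(\<lambda>m::nat. CLBINT x:{1/(real m + 1)..1}. Fi a t x) \<longlonglongrightarrow> (CLBINT x:{0<..1}. Fi a t x)"
  unfolding set_lebesgue_integral_def
proof (rule integral_dominated_convergence[where w = "\<lambda>x. norm (indicator {0<..1} x *\<^sub>R Fi a t x)"])
  show "integrable lborel (\<lambda>x. norm (indicator {0<..1} x *\<^sub>R Fi a t x))"
    using integrable_norm[OF Fi_int[OF assms, of t, unfolded set_integrable_def]] by simp
  show "AE x in lborel. (\<lambda>m::nat. indicator {1/(real m + 1)..1} x *\<^sub>R Fi a t x) \<longlonglongrightarrow> indicator {0<..1} x *\<^sub>R Fi a t x"
  proof (rule AE_I2)
    fix x :: real
    show "(\<lambda>m::nat. indicator {1/(real m + 1)..1} x *\<^sub>R Fi a t x) \<longlonglongrightarrow> indicator {0<..1} x *\<^sub>R Fi a t x"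
    proof (cases "0 < x")
      case True
      obtain N :: nat where N: "1 / x < N" using reals_Archimedean2 by blast
      have "eventually (\<lambda>m::nat. indicator {1/(real m + 1)..1} x *\<^sub>R Fi a t x = indicator {0<..1} x *\<^sub>R Fi a t x) sequentially"
        unfolding eventually_sequentially
      proof (intro exI allI impI)
        fix m assume "N \<le> m"
        then have "1 / x < real m + 1" using N by linarith
        then have "1 / (real m + 1) \<le> x" using True by (simp add: field_simps)
        then show "indicator {1/(real m + 1)..1} x *\<^sub>R Fi a t x = indicator {0<..1} x *\<^sub>R Fi a t x"
          using True by (auto simp: indicator_def)
      qed
      then show ?thesis by (rule tendsto_eventually)
    next
      case False
      have "\<not> 1 / (real m + 1) \<le> x" for m :: nat
        using False by (smt (verit) divide_pos_pos of_nat_0_le_iff)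
      then have "indicator {1/(real m + 1)..1} x = (0::real)" for m :: nat
        by (simp add: indicator_def)
      then show ?thesis using False by (simp only: ) (simp add: indicator_def)
    qed
  qed
  fix m :: nat
  show "AE x in lborel. norm (indicator {1/(real m + 1)..1} x *\<^sub>R Fi a t x) \<le> norm (indicator {0<..1} x *\<^sub>R Fi a t x)"
  proof (rule AE_I2)
    fix x :: real
    have p: "0 < 1 / (real m + 1)" by simp
    show "norm (indicator {1/(real m + 1)..1} x *\<^sub>R Fi a t x) \<le> norm (indicator {0<..1} x *\<^sub>R Fi a t x)"
    proof (cases "x \<in> {1/(real m + 1)..1}")
      case True
      then have "1/(real m + 1) \<le> x" "x \<le> 1" by auto
      then have "0 < x" "x \<le> 1" using p by linarith+
      then have "x \<in> {0<..1}" by simp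
      then show ?thesis using True by simp
    qed simp
  qed
qed auto



definition Ge :: "real \<Rightarrow> real \<Rightarrow> real \<Rightarrow> real" where
  "Ge a e l = (LBINT x:{e..1}. (exp (l * x) - 1 - l * x) * qf a x)"

lemma mgf_nu:
  assumes e: "0 < e" "e \<le> 1" and n: "0 < n" and L: "Lam a e \<le> n"
  shows "(\<integral>x. exp (l * x) \<partial>nu a e n) \<le> exp (Ge a e l)"
proof -
  define D where "D = Dr a e"
  define Lm where "Lm = Lam a e"
  define K where "K = (LBINT x:{e..1}. qf a x * exp (l * x))"
  define c where "c = exp (- (l * D / n))"
  have qc: "continuous_on {e..1} (qf a)" using qf_cont e by auto
  have siK: "set_integrable lborel {e..1} (\<lambda>x. qf a x * exp (l * x))"
    by (intro borel_integrable_atLeastAtMost' continuous_intros qc)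
  have siL: "set_integrable lborel {e..1} (\<lambda>x. qf a x)"
    by (intro borel_integrable_atLeastAtMost' continuous_intros qc)
  have siD: "set_integrable lborel {e..1} (\<lambda>x. l * (x * qf a x))"
    by (intro borel_integrable_atLeastAtMost' continuous_intros qc)
  have ce: "continuous_on UNIV (\<lambda>s. exp (l * s))" by (intro continuous_intros)
  have "(\<integral>x. exp (l * x) \<partial>rho a e n) = (1 - Lm / n) * exp (l * (- D / n)) +
      (1 / n) * (LBINT x:{e..1}. qf a x * exp (l * (x - D / n)))"
    using rho_integral(2)[OF e n L ce] by (simp add: D_def Lm_def)
  also have "(LBINT x:{e..1}. qf a x * exp (l * (x - D / n))) = (LBINT x:{e..1}. c * (qf a x * exp (l * x)))"
    by (rule set_lebesgue_integral_cong) (auto simp: c_def right_diff_distrib exp_diff exp_minus field_simps)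
  also have "\<dots> = c * K" unfolding K_def by simp
  finally have r: "(\<integral>x. exp (l * x) \<partial>rho a e n) = c * (1 + (K - Lm) / n)"
    using n by (simp add: c_def field_simps)
  have G: "Ge a e l = K - Lm - l * D"
  proof -
    have "Ge a e l = (LBINT x:{e..1}. qf a x * exp (l * x) - qf a x - l * (x * qf a x))"
      unfolding Ge_def by (rule set_lebesgue_integral_cong) (auto simp: algebra_simps)
    also have "\<dots> = K - Lm - l * D"
      using siK siL siD unfolding K_def Lm_def D_def Lam_def Dr_def
      by (simp add: set_integral_diff)
    finally show ?thesis .
  qed
  have r2: "(\<integral>x. exp (l * x) \<partial>rho a e n) \<le> exp (Ge a e l / n)"
  proof -
    have "c * (1 + (K - Lm) / n) \<le> c * exp ((K - Lm) / n)"
      by (intro mult_left_mono exp_ge_add_one_self) (auto simp: c_def)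
    also have "\<dots> = exp (Ge a e l / n)"
      unfolding G c_def by (simp add: exp_add[symmetric] diff_divide_distrib)
    finally show ?thesis using r by simp
  qed
  have nn: "0 \<le> (\<integral>x. exp (l * x) \<partial>rho a e n)"
    by (intro Bochner_Integration.integral_nonneg) auto
  have "(\<integral>x. exp (l * x) \<partial>nu a e n) = (\<integral>x. exp (l * x) \<partial>rho a e n) ^ n"
    by (rule nu_integral_mult[OF e n L ce]) (auto simp: exp_add distrib_left)
  also have "\<dots> \<le> exp (Ge a e l / n) ^ n"
    by (rule power_mono[OF r2 nn])
  also have "\<dots> = exp (Ge a e l)"
    using n by (simp flip: exp_of_nat_mult)
  finally show ?thesis .
qed



definition es :: "nat \<Rightarrow> real" where "es m = 1 / (real m + 1)"
definition ns :: "real \<Rightarrow> nat \<Rightarrow> nat" where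
  "ns a m = 4 * (m + 1) * (nat \<lceil>Lam a (es m)\<rceil> + 1)\<^sup>2"

lemma es_props: "0 < es m" "es m \<le> 1"
  unfolding es_def by auto

lemma ns_props: "0 < ns a m" "4 * Lam a (es m) \<le> ns a m" "Lam a (es m) \<le> ns a m"
  "4 * (Lam a (es m))\<^sup>2 / ns a m \<le> 1 / (real m + 1)"
proof -
  define K where "K = nat \<lceil>Lam a (es m)\<rceil> + 1"
  have LK: "Lam a (es m) \<le> K" unfolding K_def by linarith
  have K1: "1 \<le> K" unfolding K_def by simp
  have L0: "0 \<le> Lam a (es m)" by (rule Lam_nonneg)
  have nsK: "real (ns a m) = 4 * (real m + 1) * (real K)\<^sup>2"
    unfolding ns_def K_def by simp
  show "0 < ns a m" unfolding ns_def by simp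
  have "real K \<le> (real K)\<^sup>2" using K1 by (simp add: power2_eq_square)
  also have "\<dots> \<le> (real m + 1) * (real K)\<^sup>2"
    using mult_right_mono[of 1 "real m + 1" "(real K)\<^sup>2"] by simp
  finally have "4 * Lam a (es m) \<le> 4 * ((real m + 1) * (real K)\<^sup>2)" using LK by linarith
  then show "4 * Lam a (es m) \<le> ns a m" unfolding nsK by (simp only: mult.assoc)
  then show "Lam a (es m) \<le> ns a m" using L0 by linarith
  have "(Lam a (es m))\<^sup>2 \<le> (real K)\<^sup>2" using LK L0 by (intro power_mono) auto
  then have "4 * (Lam a (es m))\<^sup>2 / ns a m \<le> 4 * (real K)\<^sup>2 / ns a m"
    by (intro divide_right_mono) auto
  also have "\<dots> = 1 / (real m + 1)"
  proof -
    have "4 * (real K)\<^sup>2 \<noteq> 0" using K1 by simp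
    then have "4 * (real K)\<^sup>2 / (4 * (real K)\<^sup>2 * (real m + 1)) = 1 / (real m + 1)"
      by (rule nonzero_divide_mult_cancel_left)
    then show ?thesis unfolding nsK by (simp only: ac_simps)
  qed
  finally show "4 * (Lam a (es m))\<^sup>2 / ns a m \<le> 1 / (real m + 1)" .
qed

lemma char_conv:
  assumes a: "a < 2" and hyp: "char \<mu> t = exp (CLBINT x:{0<..1}. Fi a t x)"
  shows "(\<lambda>m. char (nu a (es m) (ns a m)) t) \<longlonglongrightarrow> char \<mu> t"
proof -
  define Z where "Z m = exp (CLBINT x:{es m..1}. Fi a t x)" for m
  have Z: "Z \<longlonglongrightarrow> char \<mu> t"
    unfolding Z_def hyp es_def by (intro tendsto_exp Fi_lim a)
  have "(\<lambda>m. char (nu a (es m) (ns a m)) t - Z m) \<longlonglongrightarrow> 0"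
  proof (rule Lim_null_comparison)
    show "\<forall>\<^sub>F m in sequentially. norm (char (nu a (es m) (ns a m)) t - Z m) \<le> inverse (real (Suc m))"
    proof (intro always_eventually allI)
      fix m
      have "norm (char (nu a (es m) (ns a m)) t - Z m) \<le> 4 * (Lam a (es m))\<^sup>2 / ns a m"
        unfolding Z_def by (intro char_nu_approx es_props ns_props)
      also have "\<dots> \<le> 1 / (real m + 1)" by (rule ns_props)
      finally show "norm (char (nu a (es m) (ns a m)) t - Z m) \<le> inverse (real (Suc m))"
        by (simp add: inverse_eq_divide add.commute)
    qed
    show "(\<lambda>m. inverse (real (Suc m))) \<longlonglongrightarrow> 0" by (rule LIMSEQ_inverse_real_of_nat)
  qed
  from tendsto_add[OF this Z] show ?thesis by simp
qed



lemma tail: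
  fixes \<mu> :: "real measure"
  assumes mu: "real_distribution \<mu>" and a: "a < 2"
    and hyp: "\<And>t. char \<mu> t = exp (CLBINT x:{0<..1}. Fi a t x)"
    and GB: "\<And>e. 0 < e \<Longrightarrow> e \<le> 1 \<Longrightarrow> Ge a e l \<le> B"
  shows "measure \<mu> {x. 0 \<le> l * x - s} \<le> exp (B - s)"
proof -
  interpret mu: real_distribution \<mu> by (rule mu)
  define \<nu> where "\<nu> m = nu a (es m) (ns a m)" for m
  have rd: "\<And>m. real_distribution (\<nu> m)"
    unfolding \<nu>_def by (intro nu_prob es_props ns_props)
  have wc: "weak_conv_m \<nu> \<mu>"
    by (rule levy_continuity[OF rd mu]) (unfold \<nu>_def, rule char_conv[OF a hyp])
  define h where "h x = min 1 (exp (l * x - s))" for x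
  have hc: "\<And>x. isCont h x" unfolding h_def by (intro continuous_intros)
  have hb: "\<And>x. norm (h x) \<le> 1" unfolding h_def by auto
  have hm[measurable]: "h \<in> borel_measurable borel" unfolding h_def by measurable
  have lim: "(\<lambda>m. integral\<^sup>L (\<nu> m) h) \<longlonglongrightarrow> integral\<^sup>L \<mu> h"
    by (rule weak_conv_imp_integral_bdd_continuous_conv[OF rd mu wc hc hb])
  have bnd: "integral\<^sup>L (\<nu> m) h \<le> exp (B - s)" for m
  proof -
    interpret N: real_distribution "\<nu> m" by (rule rd)
    have ce: "continuous_on UNIV (\<lambda>x. exp (l * x))" by (intro continuous_intros)
    have ie: "integrable (\<nu> m) (\<lambda>x. exp (l * x))"
      unfolding \<nu>_def by (intro nu_integrable_mult es_props ns_props ce) (auto simp: exp_add distrib_left)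
    have ih: "integrable (\<nu> m) h"
      by (rule N.integrable_const_bound[where B=1]) (auto intro!: AE_I2 simp: h_def)
    have "integral\<^sup>L (\<nu> m) h \<le> (\<integral>x. exp (- s) * exp (l * x) \<partial>\<nu> m)"
    proof (rule integral_mono[OF ih])
      show "integrable (\<nu> m) (\<lambda>x. exp (- s) * exp (l * x))" using ie by simp
      fix x show "h x \<le> exp (- s) * exp (l * x)"
        by (simp add: h_def exp_diff exp_minus divide_inverse mult.commute)
    qed
    also have "\<dots> = exp (- s) * (\<integral>x. exp (l * x) \<partial>\<nu> m)" by simp
    also have "\<dots> \<le> exp (- s) * exp (Ge a (es m) l)"
      unfolding \<nu>_def by (intro mult_left_mono mgf_nu es_props ns_props) auto
    also have "\<dots> \<le> exp (- s) * exp B"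
      using GB[OF es_props] by simp
    also have "\<dots> = exp (B - s)" by (simp add: exp_add[symmetric])
    finally show ?thesis .
  qed
  have I: "integral\<^sup>L \<mu> h \<le> exp (B - s)"
    using lim bnd by (intro LIMSEQ_le_const2) auto
  have S[measurable]: "{x. 0 \<le> l * x - s} \<in> sets borel" by measurable
  have "measure \<mu> {x. 0 \<le> l * x - s} = (\<integral>x. indicator {x. 0 \<le> l * x - s} x \<partial>\<mu>)"
    by (simp add: mu.events_eq_borel)
  also have "\<dots> \<le> integral\<^sup>L \<mu> h"
  proof (rule integral_mono)
    show "integrable \<mu> (indicator {x. 0 \<le> l * x - s} :: real \<Rightarrow> real)"
      by (rule integrable_real_indicator) (auto simp: mu.events_eq_borel mu.emeasure_eq_measure)
    show "integrable \<mu> h"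
      by (rule mu.integrable_const_bound[where B=1]) (auto intro!: AE_I2 simp: h_def)
    fix x show "indicator {x. 0 \<le> l * x - s} x \<le> h x"
      by (auto simp: indicator_def h_def)
  qed
  finally show ?thesis using I by linarith
qed



lemma exp_neg_quad: "u \<le> 0 \<Longrightarrow> exp u - 1 - u \<le> u\<^sup>2 / 2" for u :: real
proof -
  assume u: "u \<le> 0"
  obtain t where "exp u = (\<Sum>m<3. u ^ m / fact m) + exp t / fact 3 * u ^ 3"
    using Maclaurin_exp_le[of u 3] by blast
  then have e: "exp u = 1 + u + u\<^sup>2 / 2 + exp t / 6 * u ^ 3"
    by (simp add: numeral_3_eq_3 power2_eq_square eval_nat_numeral)
  have "u ^ 3 \<le> 0" using u by (simp add: power_le_zero_eq)
  then have "exp t / 6 * u ^ 3 \<le> 0" by (simp add: mult_nonneg_nonpos)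
  then show ?thesis using e by linarith
qed

lemma exp_pos_cubic: "0 \<le> u \<Longrightarrow> u \<le> 1 \<Longrightarrow> exp u - 1 - u \<le> u\<^sup>2 / 2 + u ^ 3 / 4" for u :: real
proof -
  assume u: "0 \<le> u" "u \<le> 1"
  obtain t where t: "\<bar>t\<bar> \<le> \<bar>u\<bar>" "exp u = (\<Sum>m<5. u ^ m / fact m) + exp t / fact 5 * u ^ 5"
    using Maclaurin_exp_le[of u 5] by blast
  then have e: "exp u = 1 + u + u\<^sup>2 / 2 + u ^ 3 / 6 + u ^ 4 / 24 + exp t / 120 * u ^ 5"
    by (simp add: power2_eq_square eval_nat_numeral fact_numeral)
  have "exp t \<le> exp 1" using t(1) u by simp
  then have et: "exp t \<le> 3" using exp_le by linarith
  have u4: "u ^ 4 \<le> u ^ 3" using u by (simp add: power_decreasing)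
  have u5: "u ^ 5 \<le> u ^ 3" using u by (simp add: power_decreasing)
  have "exp t / 120 * u ^ 5 \<le> 3 / 120 * u ^ 3"
    using et u5 u by (intro mult_mono) auto
  moreover have "0 \<le> u ^ 3" using u by simp
  ultimately show ?thesis using e u4 by linarith
qed

lemma powr_bound:
  assumes p: "p > -1" and e: "0 < e"
  shows "set_integrable lborel {e..1} (\<lambda>x::real. x powr p)"
    and "(LBINT x:{e..1}. x powr p) \<le> 1 / (p + 1)"
proof -
  have hi: "((\<lambda>x::real. x powr p) has_integral (1 / (p + 1))) {0..1}"
    using has_integral_powr_from_0[OF p, of 1] by simp
  then have "(\<lambda>x::real. x powr p) integrable_on {0..1}" by blast
  then have "(\<lambda>x::real. x powr p) absolutely_integrable_on {0..1}"
    by (subst absolutely_integrable_on_iff_nonneg) auto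
  then have s01: "set_integrable lborel {0..1} (\<lambda>x::real. x powr p)"
    unfolding set_integrable_def by (subst (asm) integrable_completion) auto
  have v01: "(LBINT x:{0..1}. x powr p) = 1 / (p + 1)"
    using set_borel_integral_eq_integral(2)[OF s01] hi by (simp add: integral_unique)
  show se: "set_integrable lborel {e..1} (\<lambda>x::real. x powr p)"
    using e by (intro borel_integrable_atLeastAtMost' continuous_intros) auto
  have "(LBINT x:{e..1}. x powr p) \<le> (LBINT x:{0..1}. x powr p)"
    unfolding set_lebesgue_integral_def
    using se s01 e unfolding set_integrable_def
    by (intro integral_mono) (auto simp: indicator_def)
  then show "(LBINT x:{e..1}. x powr p) \<le> 1 / (p + 1)" using v01 by simp
qed

lemma qf_sq: "0 < x \<Longrightarrow> (l * x)\<^sup>2 * qf a x = l\<^sup>2 * x powr (1 - a)"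
proof -
  assume x: "0 < x"
  have "x powr 2 / x powr (a + 1) = x powr (1 - a)"
    by (simp only: powr_diff[symmetric]) (simp add: algebra_simps)
  moreover have "(l * x)\<^sup>2 * qf a x = l\<^sup>2 * (x powr 2 / x powr (a + 1))"
    using x by (simp add: qf_def power_mult_distrib powr_realpow)
  ultimately show ?thesis by simp
qed

lemma qf_cube: "0 < x \<Longrightarrow> (l * x) ^ 3 * qf a x = l ^ 3 * x powr (2 - a)"
proof -
  assume x: "0 < x"
  have "x powr 3 / x powr (a + 1) = x powr (2 - a)"
    by (simp only: powr_diff[symmetric]) (simp add: algebra_simps)
  moreover have "(l * x) ^ 3 * qf a x = l ^ 3 * (x powr 3 / x powr (a + 1))"
    using x by (simp add: qf_def power_mult_distrib powr_realpow)
  ultimately show ?thesis by simp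
qed

lemma Ge_neg:
  assumes a: "1 < a" "a < 2" and e: "0 < e" "e \<le> 1" and l: "l \<le> 0"
  shows "Ge a e l \<le> l\<^sup>2 / (2 * (2 - a))"
proof -
  have qc: "continuous_on {e..1} (qf a)" using qf_cont e by auto
  note P = powr_bound[of "1 - a" e]
  have "Ge a e l \<le> (LBINT x:{e..1}. l\<^sup>2 / 2 * x powr (1 - a))"
    unfolding Ge_def
  proof (rule set_integral_mono)
    show "set_integrable lborel {e..1} (\<lambda>x. (exp (l * x) - 1 - l * x) * qf a x)"
      by (intro borel_integrable_atLeastAtMost' continuous_intros qc)
    show "set_integrable lborel {e..1} (\<lambda>x. l\<^sup>2 / 2 * x powr (1 - a))"
      using e by (intro borel_integrable_atLeastAtMost' continuous_intros) auto
    fix x assume x: "x \<in> {e..1}"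
    then have x0: "0 < x" using e by auto
    have "l * x \<le> 0" using l x0 by (simp add: mult_nonpos_nonneg)
    then have "(exp (l * x) - 1 - l * x) * qf a x \<le> (l * x)\<^sup>2 / 2 * qf a x"
      by (intro mult_right_mono exp_neg_quad qf_nonneg)
    also have "\<dots> = l\<^sup>2 / 2 * x powr (1 - a)" using qf_sq[OF x0, of l a] by simp
    finally show "(exp (l * x) - 1 - l * x) * qf a x \<le> l\<^sup>2 / 2 * x powr (1 - a)" .
  qed
  also have "\<dots> = l\<^sup>2 / 2 * (LBINT x:{e..1}. x powr (1 - a))" by simp
  also have "\<dots> \<le> l\<^sup>2 / 2 * (1 / (1 - a + 1))"
    using P(2) a e by (intro mult_left_mono) auto
  also have "\<dots> = l\<^sup>2 / (2 * (2 - a))" by simp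
  finally show ?thesis .
qed

lemma Ge_pos:
  assumes a: "1 < a" "a < 2" and e: "0 < e" "e \<le> 1" and l: "0 \<le> l" "l \<le> 1"
  shows "Ge a e l \<le> l\<^sup>2 / (2 * (2 - a)) + 1 / 4"
proof -
  have qc: "continuous_on {e..1} (qf a)" using qf_cont e by auto
  note P1 = powr_bound[of "1 - a" e] and P2 = powr_bound[of "2 - a" e]
  have "Ge a e l \<le> (LBINT x:{e..1}. l\<^sup>2 / 2 * x powr (1 - a) + l ^ 3 / 4 * x powr (2 - a))"
    unfolding Ge_def
  proof (rule set_integral_mono)
    show "set_integrable lborel {e..1} (\<lambda>x. (exp (l * x) - 1 - l * x) * qf a x)"
      by (intro borel_integrable_atLeastAtMost' continuous_intros qc)
    show "set_integrable lborel {e..1} (\<lambda>x. l\<^sup>2 / 2 * x powr (1 - a) + l ^ 3 / 4 * x powr (2 - a))"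
      using e by (intro borel_integrable_atLeastAtMost' continuous_intros) auto
    fix x assume x: "x \<in> {e..1}"
    then have x0: "0 < x" "x \<le> 1" using e by auto
    have "0 \<le> l * x" "l * x \<le> 1" using l x0 by (auto simp: mult_le_one)
    then have "(exp (l * x) - 1 - l * x) * qf a x \<le> ((l * x)\<^sup>2 / 2 + (l * x) ^ 3 / 4) * qf a x"
      by (intro mult_right_mono exp_pos_cubic qf_nonneg)
    also have "\<dots> = ((l * x)\<^sup>2 * qf a x) / 2 + ((l * x) ^ 3 * qf a x) / 4"
      by (simp add: algebra_simps)
    also have "\<dots> = l\<^sup>2 / 2 * x powr (1 - a) + l ^ 3 / 4 * x powr (2 - a)"
      using qf_sq[OF x0(1), of l a] qf_cube[OF x0(1), of l a] by simp
    finally show "(exp (l * x) - 1 - l * x) * qf a x \<le> l\<^sup>2 / 2 * x powr (1 - a) + l ^ 3 / 4 * x powr (2 - a)" .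
  qed
  also have "\<dots> = l\<^sup>2 / 2 * (LBINT x:{e..1}. x powr (1 - a)) + l ^ 3 / 4 * (LBINT x:{e..1}. x powr (2 - a))"
    using P1(1) P2(1) a e by (subst set_integral_add(2)) (auto intro: set_integrable_mult_right)
  also have "\<dots> \<le> l\<^sup>2 / 2 * (1 / (1 - a + 1)) + l ^ 3 / 4 * (1 / (2 - a + 1))"
    using P1(2) P2(2) a e l by (intro add_mono mult_left_mono) auto
  also have "l ^ 3 / 4 * (1 / (2 - a + 1)) \<le> 1 / 4"
  proof -
    have "l ^ 3 \<le> 1" using l by (simp add: power_le_one)
    moreover have "1 / (2 - a + 1) \<le> 1" using a by (simp add: divide_simps)
    ultimately have "l ^ 3 * (1 / (2 - a + 1)) \<le> 1 * 1" using l a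
      by (intro mult_mono) auto
    moreover have "l ^ 3 / 4 * (1 / (2 - a + 1)) = (l ^ 3 * (1 / (2 - a + 1))) / 4" by simp
    ultimately show ?thesis by linarith
  qed
  finally show ?thesis by simp
qed



theorem lemma9:
  fixes M :: "'a measure" and X :: "'a \<Rightarrow> real" and \<alpha> :: real
  assumes "prob_space M"
    and "X \<in> borel_measurable M"
    and "1 < \<alpha>" and "\<alpha> < 2"
    and "\<And>t. char (distr M borel X) t =
           exp (CLBINT x:{0<..1}. (iexp (t * x) - 1 - \<i> * complex_of_real (t * x))
                   * complex_of_real (1 / x powr (\<alpha> + 1)))"
  shows "(\<forall>y. 0 \<le> y \<and> y \<le> 1 / (2 - \<alpha>) \<longrightarrow>
           measure M {\<omega>\<in>space M. X \<omega> \<ge> y} \<le> exp (1/4) * exp (- (1/2) * (2 - \<alpha>) * y\<^sup>2)) \<and>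
         (\<forall>y. 0 \<le> y \<and> y \<le> 2 / (2 - \<alpha>) \<longrightarrow>
           measure M {\<omega>\<in>space M. X \<omega> \<le> - y} \<le> exp (4/3) * exp (- (1/2) * (2 - \<alpha>) * y\<^sup>2))"
proof -
  interpret P: prob_space M by (rule assms(1))
  define \<mu> where "\<mu> = distr M borel X"
  have Xm[measurable]: "X \<in> borel_measurable M" by (rule assms(2))
  have mu: "real_distribution \<mu>" unfolding \<mu>_def by (rule P.real_distribution_distr) simp
  have hyp: "\<And>t. char \<mu> t = exp (CLBINT x:{0<..1}. Fi \<alpha> t x)"
    unfolding \<mu>_def Fi_def by (rule assms(5))
  have a1: "1 < \<alpha>" and a2: "\<alpha> < 2" by fact+
  have meas: "measure M {\<omega>\<in>space M. P \<omega>} = measure \<mu> {x. Q x}"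
    if "\<And>\<omega>. P \<omega> = Q (X \<omega>)" and [measurable]: "Measurable.pred borel Q" for P Q
  proof -
    have "measure \<mu> {x. Q x} = measure M (X -` {x. Q x} \<inter> space M)"
      unfolding \<mu>_def by (rule measure_distr) auto
    also have "X -` {x. Q x} \<inter> space M = {\<omega>\<in>space M. P \<omega>}" using that(1) by auto
    finally show ?thesis by simp
  qed
  interpret mu: real_distribution \<mu> by (rule mu)
  show ?thesis
  proof (intro conjI allI impI)
    fix y :: real assume y: "0 \<le> y \<and> y \<le> 1 / (2 - \<alpha>)"
    define l where "l = (2 - \<alpha>) * y"
    have l0: "0 \<le> l" using y a2 unfolding l_def by simp
    have l1: "l \<le> 1" using y a2 unfolding l_def by (simp add: field_simps)
    have T: "measure \<mu> {x. 0 \<le> l * x - l * y} \<le> exp (l\<^sup>2 / (2 * (2 - \<alpha>)) + 1 / 4 - l * y)"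
      by (rule tail[OF mu a2 hyp Ge_pos[OF a1 a2 _ _ l0 l1]])
    have "measure M {\<omega>\<in>space M. X \<omega> \<ge> y} = measure \<mu> {x. y \<le> x}"
      by (rule meas) auto
    also have "\<dots> \<le> measure \<mu> {x. 0 \<le> l * x - l * y}"
    proof (rule mu.finite_measure_mono)
      show "{x. y \<le> x} \<subseteq> {x. 0 \<le> l * x - l * y}"
        using l0 by (auto simp: mult_left_mono simp flip: right_diff_distrib)
      show "{x. 0 \<le> l * x - l * y} \<in> sets \<mu>" by (simp add: mu.events_eq_borel)
    qed
    also note T
    also have "l\<^sup>2 / (2 * (2 - \<alpha>)) + 1 / 4 - l * y = 1/4 + (- (1/2) * (2 - \<alpha>) * y\<^sup>2)"
      using a2 unfolding l_def by (simp add: field_simps power2_eq_square)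
    also have "exp \<dots> = exp (1/4) * exp (- (1/2) * (2 - \<alpha>) * y\<^sup>2)" by (rule exp_add)
    finally show "measure M {\<omega>\<in>space M. X \<omega> \<ge> y} \<le> exp (1/4) * exp (- (1/2) * (2 - \<alpha>) * y\<^sup>2)" .
  next
    fix y :: real assume y: "0 \<le> y \<and> y \<le> 2 / (2 - \<alpha>)"
    define l where "l = - ((2 - \<alpha>) * y)"
    define s where "s = (2 - \<alpha>) * y\<^sup>2"
    have l0: "l \<le> 0" using y a2 unfolding l_def by simp
    have T: "measure \<mu> {x. 0 \<le> l * x - s} \<le> exp (l\<^sup>2 / (2 * (2 - \<alpha>)) - s)"
      by (rule tail[OF mu a2 hyp Ge_neg[OF a1 a2 _ _ l0]])
    have "measure M {\<omega>\<in>space M. X \<omega> \<le> - y} = measure \<mu> {x. x \<le> - y}"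
      by (rule meas) auto
    also have "\<dots> \<le> measure \<mu> {x. 0 \<le> l * x - s}"
    proof (rule mu.finite_measure_mono)
      show "{x. x \<le> - y} \<subseteq> {x. 0 \<le> l * x - s}"
      proof
        fix x assume "x \<in> {x. x \<le> - y}"
        then have "0 \<le> - (x + y)" by simp
        moreover have "0 \<le> (2 - \<alpha>) * y" using y a2 by simp
        ultimately have "0 \<le> ((2 - \<alpha>) * y) * (- (x + y))" by simp
        then show "x \<in> {x. 0 \<le> l * x - s}"
          unfolding l_def s_def by (simp add: algebra_simps power2_eq_square)
      qed
      show "{x. 0 \<le> l * x - s} \<in> sets \<mu>" by (simp add: mu.events_eq_borel)
    qed
    also note T
    also have "l\<^sup>2 / (2 * (2 - \<alpha>)) - s = - (1/2) * (2 - \<alpha>) * y\<^sup>2"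
      using a2 unfolding l_def s_def by (simp add: field_simps power2_eq_square)
    also have "exp (- (1/2) * (2 - \<alpha>) * y\<^sup>2) \<le> exp (4/3) * exp (- (1/2) * (2 - \<alpha>) * y\<^sup>2)"
      by simp
    finally show "measure M {\<omega>\<in>space M. X \<omega> \<le> - y} \<le> exp (4/3) * exp (- (1/2) * (2 - \<alpha>) * y\<^sup>2)" .
  qed
qed


end
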